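(* Let $\varphi$ be an Orlicz $N$-function with Young–Fenchel transform $\psi$. Let $\{X_{k,n},k\ge1,n\ge1\}$ be a double array of $\varphi$-subgaussian random variables, let $g$ be a positive non-decreasing function, set $a_{m,j}=g(\ln(mj))\psi^{-1}(\ln(mj))$, $Y_{m,j}=\max_{1\le k\le m,1\le n\le j}X_{k,n}-a_{m,j}$ and $Y^+_{m,j}=\max(Y_{m,j},0)$. Let $\alpha\in\mathbb R$. Suppose there is a positive-valued function $f$ such that for all $m,j\ge1$, $1\le k\le m$, $1\le n\le j$, $$\frac{g(\ln(mj))}{\tau_\varphi(X_{k,n})}\ge f\left(\frac{mj}{kn}\right)\ge1,$$ and $$\sum_{m=1}^\infty\sum_{j=1}^\infty\sum_{k=1}^m\sum_{n=1}^j(mj)^{-\alpha-f\left(\frac{mj}{kn}\right)}<+\infty.$$ Then $$\sum_{m=1}^\infty\sum_{j=1}^\infty(mj)^{-\alpha}P(Y^+_{m,j}>0)<+\infty.$$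
   Context: An Orlicz $N$-function is a continuous even convex function $\varphi:\mathbb R\to\mathbb R$ with $\varphi(0)=0$, increasing on $(0,\infty)$, with $\varphi(x)/x\to0$ as $x\to0$ and $\varphi(x)/x\to+\infty$ as $x\to+\infty$. The Young–Fenchel transform is $\psi(x)=\sup_{y\in\mathbb R}(xy-\varphi(y))$ (itself an Orlicz $N$-function); $\psi^{-1}$ is the inverse of $\psi$ on $[0,\infty)$. A random variable $X$ is $\varphi$-subgaussian if $EX=0$ and there is a finite $a>0$ with $E\exp(tX)\le\exp(\varphi(at))$ for all $t$; $\tau_\varphi(X)=\inf\{a>0:E\exp(tX)\le\exp(\varphi(at))\ \forall t\}$. *)

theory Defs
  imports "HOL-Probability.Probability"
begin

definition orlicz_N :: "(real \<Rightarrow> real) \<Rightarrow> bool" where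
  "orlicz_N \<phi> \<longleftrightarrow>
     continuous_on UNIV \<phi> \<and> (\<forall>x. \<phi> (- x) = \<phi> x) \<and> convex_on UNIV \<phi> \<and>
     \<phi> 0 = 0 \<and> strict_mono_on {0<..} \<phi> \<and>
     ((\<lambda>x. \<phi> x / x) \<longlongrightarrow> 0) (at 0) \<and>
     filterlim (\<lambda>x. \<phi> x / x) at_top at_top"

definition young_fenchel :: "(real \<Rightarrow> real) \<Rightarrow> real \<Rightarrow> real" where
  "young_fenchel \<phi> x = (SUP y. x * y - \<phi> y)"

definition inv_nonneg :: "(real \<Rightarrow> real) \<Rightarrow> real \<Rightarrow> real" where
  "inv_nonneg \<psi> = the_inv_into {0..} \<psi>"

definition mgf_bounded :: "'a measure \<Rightarrow> (real \<Rightarrow> real) \<Rightarrow> ('a \<Rightarrow> real) \<Rightarrow> real \<Rightarrow> bool" where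
  "mgf_bounded M \<phi> X a \<longleftrightarrow>
     (\<forall>t. integrable M (\<lambda>\<omega>. exp (t * X \<omega>)) \<and>
          (\<integral>\<omega>. exp (t * X \<omega>) \<partial>M) \<le> exp (\<phi> (a * t)))"

definition phi_subgaussian :: "'a measure \<Rightarrow> (real \<Rightarrow> real) \<Rightarrow> ('a \<Rightarrow> real) \<Rightarrow> bool" where
  "phi_subgaussian M \<phi> X \<longleftrightarrow>
     X \<in> borel_measurable M \<and> integrable M X \<and> (\<integral>\<omega>. X \<omega> \<partial>M) = 0 \<and>
     (\<exists>a>0. mgf_bounded M \<phi> X a)"

definition tau_phi :: "'a measure \<Rightarrow> (real \<Rightarrow> real) \<Rightarrow> ('a \<Rightarrow> real) \<Rightarrow> real" where
  "tau_phi M \<phi> X = Inf {a. a > 0 \<and> mgf_bounded M \<phi> X a}"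

end

theory Submission
  imports Defs
begin


lemma phi_nonneg: assumes "orlicz_N \<phi>" shows "\<phi> x \<ge> 0"
proof -
  have c: "convex_on UNIV \<phi>" and e: "\<phi> (-x) = \<phi> x" and z: "\<phi> 0 = 0"
    using assms unfolding orlicz_N_def by auto
  have "\<phi> ((1 - 1/2) *\<^sub>R x + (1/2) *\<^sub>R (-x)) \<le> (1 - 1/2) * \<phi> x + (1/2) * \<phi> (-x)"
    by (rule convex_onD[OF c]) auto
  then show ?thesis using e z by simp
qed

lemma phi_scale: assumes "orlicz_N \<phi>" "0 \<le> l" "l \<le> 1" shows "\<phi> (l * z) \<le> \<phi> z"
proof -
  have c: "convex_on UNIV \<phi>" and z: "\<phi> 0 = 0"
    using assms unfolding orlicz_N_def by auto
  have "\<phi> ((1 - l) *\<^sub>R 0 + l *\<^sub>R z) \<le> (1 - l) * \<phi> 0 + l * \<phi> z"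
    by (rule convex_onD[OF c]) (use assms in auto)
  also have "\<dots> \<le> \<phi> z" using z phi_nonneg[OF assms(1), of z] assms
    by (simp add: mult_left_le_one_le)
  finally show ?thesis by simp
qed

lemma psi_bdd: assumes "orlicz_N \<phi>" shows "bdd_above (range (\<lambda>y. x * y - \<phi> y))"
proof -
  have lim: "filterlim (\<lambda>x. \<phi> x / x) at_top at_top" and e: "\<And>x. \<phi> (-x) = \<phi> x"
    using assms unfolding orlicz_N_def by auto
  have "eventually (\<lambda>y. \<phi> y / y \<ge> \<bar>x\<bar> + 1) at_top"
    using lim by (simp add: filterlim_at_top)
  then obtain Y where Y: "\<And>y. y \<ge> Y \<Longrightarrow> \<phi> y / y \<ge> \<bar>x\<bar> + 1"
    by (auto simp: eventually_at_top_linorder)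
  define Z where "Z = max Y 1"
  have Z: "Z > 0" "\<And>y. \<bar>y\<bar> \<ge> Z \<Longrightarrow> \<phi> y \<ge> (\<bar>x\<bar> + 1) * \<bar>y\<bar>"
  proof -
    show "Z > 0" unfolding Z_def by simp
    fix y :: real assume yz: "\<bar>y\<bar> \<ge> Z"
    have "Y \<le> \<bar>y\<bar>" using yz unfolding Z_def by simp
    then have "\<phi> \<bar>y\<bar> / \<bar>y\<bar> \<ge> \<bar>x\<bar> + 1" by (rule Y)
    moreover have "\<bar>y\<bar> > 0" using yz \<open>Y \<le> \<bar>y\<bar>\<close> unfolding Z_def by linarith
    ultimately have "\<phi> \<bar>y\<bar> \<ge> (\<bar>x\<bar> + 1) * \<bar>y\<bar>" by (simp add: field_simps)
    moreover have "\<phi> \<bar>y\<bar> = \<phi> y" using e[of y] by (cases "y \<ge> 0") auto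
    ultimately show "\<phi> y \<ge> (\<bar>x\<bar> + 1) * \<bar>y\<bar>" by simp
  qed
  have "x * y - \<phi> y \<le> \<bar>x\<bar> * Z" for y
  proof (cases "\<bar>y\<bar> \<ge> Z")
    case True
    have "x * y \<le> \<bar>x\<bar> * \<bar>y\<bar>" by (metis abs_ge_self abs_mult)
    then show ?thesis using Z(2)[OF True] Z(1) by (smt (verit) mult_nonneg_nonneg abs_ge_zero distrib_right)
  next
    case False
    have "x * y \<le> \<bar>x\<bar> * \<bar>y\<bar>" by (metis abs_ge_self abs_mult)
    also have "\<dots> \<le> \<bar>x\<bar> * Z" using False by (intro mult_left_mono) auto
    finally show ?thesis using phi_nonneg[OF assms, of y] by simp
  qed
  then show ?thesis by (intro bdd_aboveI2) 
qed

lemma psi_ge: assumes "orlicz_N \<phi>" shows "young_fenchel \<phi> x \<ge> x * y - \<phi> y"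
  unfolding young_fenchel_def by (rule cSUP_upper[OF _ psi_bdd[OF assms]]) auto

lemma psi_le: assumes "\<And>y. x * y - \<phi> y \<le> B" shows "young_fenchel \<phi> x \<le> B"
  unfolding young_fenchel_def by (rule cSUP_least) (use assms in auto)

lemma psi_0: assumes "orlicz_N \<phi>" shows "young_fenchel \<phi> 0 = 0"
proof (rule antisym)
  show "young_fenchel \<phi> 0 \<le> 0" by (rule psi_le) (use phi_nonneg[OF assms] in auto)
  show "young_fenchel \<phi> 0 \<ge> 0" using psi_ge[OF assms, of 0 0] assms by (simp add: orlicz_N_def)
qed

lemma psi_nonneg: assumes "orlicz_N \<phi>" shows "young_fenchel \<phi> x \<ge> 0"
  using psi_ge[OF assms, of x 0] assms by (simp add: orlicz_N_def)

lemma psi_pos: assumes "orlicz_N \<phi>" "x > 0" shows "young_fenchel \<phi> x > 0"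
proof -
  have lim: "((\<lambda>x. \<phi> x / x) \<longlongrightarrow> 0) (at 0)" using assms unfolding orlicz_N_def by auto
  have "eventually (\<lambda>y. dist (\<phi> y / y) 0 < x) (at 0)"
    using tendstoD[OF lim assms(2)] .
  then obtain d where d: "d > 0" "\<And>y. y \<noteq> 0 \<Longrightarrow> dist y 0 < d \<Longrightarrow> dist (\<phi> y / y) 0 < x"
    by (auto simp: eventually_at)
  have "dist (\<phi> (d/2) / (d/2)) 0 < x" using d by (intro d(2)) auto
  then have "\<phi> (d/2) / (d/2) < x" by (simp only: dist_real_def diff_0_right abs_less_iff)
  then have "\<phi> (d/2) < x * (d/2)" using d by (simp add: field_simps)
  then show ?thesis using psi_ge[OF assms(1), of x "d/2"] by simp
qed

lemma psi_scale_up: assumes "orlicz_N \<phi>" "c \<ge> 1"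
  shows "young_fenchel \<phi> (c * v) \<ge> c * young_fenchel \<phi> v"
proof -
  have "young_fenchel \<phi> v \<le> young_fenchel \<phi> (c * v) / c"
  proof (rule psi_le)
    fix y
    have "c * (v * y - \<phi> y) \<le> c * v * y - \<phi> y"
      using phi_nonneg[OF assms(1), of y] assms(2) by (simp add: algebra_simps mult_le_cancel_right1)
    also have "\<dots> \<le> young_fenchel \<phi> (c * v)" using psi_ge[OF assms(1)] by simp
    finally show "v * y - \<phi> y \<le> young_fenchel \<phi> (c * v) / c" using assms(2) by (simp add: field_simps)
  qed
  then show ?thesis using assms(2) by (simp add: field_simps)
qed

lemma psi_scale_down: assumes "orlicz_N \<phi>" "0 \<le> l" "l \<le> 1"
  shows "young_fenchel \<phi> (l * x) \<le> l * young_fenchel \<phi> x"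
proof (rule psi_le)
  fix y
  have "l * x * y - \<phi> y \<le> l * (x * y - \<phi> y)"
    using phi_nonneg[OF assms(1), of y] assms(2,3) by (simp add: algebra_simps mult_left_le_one_le)
  also have "\<dots> \<le> l * young_fenchel \<phi> x" using psi_ge[OF assms(1)] assms(2) by (simp add: mult_left_mono)
  finally show "l * x * y - \<phi> y \<le> l * young_fenchel \<phi> x" .
qed

lemma psi_strict: assumes "orlicz_N \<phi>" "0 \<le> x" "x < x'"
  shows "young_fenchel \<phi> x < young_fenchel \<phi> x'"
proof -
  have x': "x' > 0" using assms by simp
  have "young_fenchel \<phi> x = young_fenchel \<phi> ((x / x') * x')" using x' by simp
  also have "\<dots> \<le> (x / x') * young_fenchel \<phi> x'"
    using assms x' by (intro psi_scale_down) auto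
  also have "\<dots> < young_fenchel \<phi> x'"
    using psi_pos[OF assms(1) x'] assms x' by (simp add: field_simps)
  finally show ?thesis .
qed

lemma psi_mono: assumes "orlicz_N \<phi>" "0 \<le> x" "x \<le> x'"
  shows "young_fenchel \<phi> x \<le> young_fenchel \<phi> x'"
  using psi_strict[OF assms(1,2), of x'] assms(3) by (cases "x = x'") auto

lemma psi_convex: assumes "orlicz_N \<phi>" shows "convex_on UNIV (young_fenchel \<phi>)"
proof (rule convex_onI)
  fix t x y :: real assume t: "0 < t" "t < 1"
  show "young_fenchel \<phi> ((1 - t) *\<^sub>R x + t *\<^sub>R y) \<le> (1 - t) * young_fenchel \<phi> x + t * young_fenchel \<phi> y"
  proof (rule psi_le)
    fix z
    have "((1 - t) *\<^sub>R x + t *\<^sub>R y) * z - \<phi> z = (1 - t) * (x * z - \<phi> z) + t * (y * z - \<phi> z)"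
      by (simp add: algebra_simps)
    also have "\<dots> \<le> (1 - t) * young_fenchel \<phi> x + t * young_fenchel \<phi> y"
      using t psi_ge[OF assms] by (intro add_mono mult_left_mono) auto
    finally show "((1 - t) *\<^sub>R x + t *\<^sub>R y) * z - \<phi> z \<le> (1 - t) * young_fenchel \<phi> x + t * young_fenchel \<phi> y" .
  qed
qed simp

lemma psi_cont: assumes "orlicz_N \<phi>" shows "continuous_on UNIV (young_fenchel \<phi>)"
  by (rule convex_on_continuous[OF open_UNIV psi_convex[OF assms]])

lemma psi_inv: assumes "orlicz_N \<phi>" "L \<ge> 0"
  shows "inv_nonneg (young_fenchel \<phi>) L \<ge> 0 \<and> young_fenchel \<phi> (inv_nonneg (young_fenchel \<phi>) L) = L"
proof -
  let ?b = "L + \<phi> 1"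
  have b: "?b \<ge> 0" using assms phi_nonneg[OF assms(1)] by (simp add: add_nonneg_nonneg)
  have "young_fenchel \<phi> ?b \<ge> ?b * 1 - \<phi> 1" by (rule psi_ge[OF assms(1)])
  then have "young_fenchel \<phi> 0 \<le> L" "L \<le> young_fenchel \<phi> ?b"
    using psi_0[OF assms(1)] assms(2) by auto
  from IVT'[OF this b continuous_on_subset[OF psi_cont[OF assms(1)]]]
  obtain v where v: "0 \<le> v" "young_fenchel \<phi> v = L" by auto
  have inj: "inj_on (young_fenchel \<phi>) {0..}"
  proof (rule inj_onI)
    fix x y :: real assume "x \<in> {0..}" "y \<in> {0..}" "young_fenchel \<phi> x = young_fenchel \<phi> y"
    then show "x = y" using psi_strict[OF assms(1), of x y] psi_strict[OF assms(1), of y x]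
      by (cases x y rule: linorder_cases) auto
  qed
  have "inv_nonneg (young_fenchel \<phi>) L = v"
    unfolding inv_nonneg_def by (rule the_inv_into_f_eq[OF inj v(2)]) (use v in auto)
  then show ?thesis using v by simp
qed



lemma mgf_at_tau:
  assumes P: "prob_space M" and o: "orlicz_N \<phi>" and sg: "phi_subgaussian M \<phi> X"
    and tp: "tau_phi M \<phi> X > 0"
  shows "integrable M (\<lambda>\<omega>. exp (t * X \<omega>)) \<and>
         (\<integral>\<omega>. exp (t * X \<omega>) \<partial>M) \<le> exp (\<phi> (tau_phi M \<phi> X * t))"
proof -
  define \<tau> where "\<tau> = tau_phi M \<phi> X"
  define S where "S = {a. a > 0 \<and> mgf_bounded M \<phi> X a}"
  have S: "S \<noteq> {}" "bdd_below S" using sg unfolding S_def phi_subgaussian_def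
    by (auto intro!: bdd_belowI[of _ 0])
  have tS: "\<tau> = Inf S" unfolding \<tau>_def S_def tau_phi_def by simp
  have up: "mgf_bounded M \<phi> X a" if "a > \<tau>" for a
  proof -
    have "Inf S < a" using that tS by simp
    then obtain b where b: "b \<in> S" "b < a" using cInf_less_iff[OF S] by auto
    have bp: "b > 0" "mgf_bounded M \<phi> X b" using b unfolding S_def by auto
    show ?thesis unfolding mgf_bounded_def
    proof
      fix s
      have "\<phi> (b * s) = \<phi> ((b / a) * (a * s))" using bp b by simp
      also have "\<dots> \<le> \<phi> (a * s)" using bp b by (intro phi_scale[OF o]) auto
      finally show "integrable M (\<lambda>\<omega>. exp (s * X \<omega>)) \<and> (\<integral>\<omega>. exp (s * X \<omega>) \<partial>M) \<le> exp (\<phi> (a * s))"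
        using bp(2) unfolding mgf_bounded_def by (meson exp_le_cancel_iff order_trans)
    qed
  qed
  have int: "integrable M (\<lambda>\<omega>. exp (t * X \<omega>))" using up[of "\<tau> + 1"] unfolding mgf_bounded_def by auto
  have cphi: "continuous_on UNIV \<phi>" using o unfolding orlicz_N_def by auto
  have "continuous_on UNIV (\<lambda>a. exp (\<phi> (a * t)))"
    by (auto intro!: continuous_intros continuous_on_compose2[OF cphi])
  then have "((\<lambda>a. exp (\<phi> (a * t))) \<longlongrightarrow> exp (\<phi> (\<tau> * t))) (at \<tau>)"
    by (simp add: continuous_on_def)
  then have lim: "((\<lambda>a. exp (\<phi> (a * t))) \<longlongrightarrow> exp (\<phi> (\<tau> * t))) (at_right \<tau>)"
    by (simp add: filterlim_at_split)
  have ev: "eventually (\<lambda>a. (\<integral>\<omega>. exp (t * X \<omega>) \<partial>M) \<le> exp (\<phi> (a * t))) (at_right \<tau>)"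
    using eventually_at_right_less[of \<tau>]
    by (rule eventually_mono) (use up in \<open>auto simp: mgf_bounded_def\<close>)
  have "(\<integral>\<omega>. exp (t * X \<omega>) \<partial>M) \<le> exp (\<phi> (\<tau> * t))"
    by (rule tendsto_le[OF _ lim tendsto_const ev]) simp
  then show ?thesis using int unfolding \<tau>_def by simp
qed

lemma tail_bound:
  assumes P: "prob_space M" and o: "orlicz_N \<phi>" and sg: "phi_subgaussian M \<phi> X"
    and tp: "tau_phi M \<phi> X > 0" and c: "c \<ge> 0"
  shows "measure M {\<omega> \<in> space M. X \<omega> > c} \<le> exp (- young_fenchel \<phi> (c / tau_phi M \<phi> X))"
proof -
  interpret prob_space M by (rule P)
  define \<tau> where "\<tau> = tau_phi M \<phi> X"
  have tp': "\<tau> > 0" using tp unfolding \<tau>_def .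
  have Xm[measurable]: "X \<in> borel_measurable M" using sg unfolding phi_subgaussian_def by auto
  define p where "p = measure M {\<omega> \<in> space M. X \<omega> > c}"
  have p01: "0 \<le> p" "p \<le> 1" unfolding p_def by auto
  have bnd: "p \<le> exp (\<phi> s - s * (c / \<tau>))" if s: "s \<ge> 0" for s
  proof -
    define t where "t = s / \<tau>"
    have t: "t \<ge> 0" using s tp' unfolding t_def by simp
    have m: "integrable M (\<lambda>\<omega>. exp (t * X \<omega>)) \<and>
         (\<integral>\<omega>. exp (t * X \<omega>) \<partial>M) \<le> exp (\<phi> (\<tau> * t))"
      using mgf_at_tau[OF P o sg tp] unfolding \<tau>_def by blast
    have "p \<le> measure M {\<omega> \<in> space M. exp (t * X \<omega>) \<ge> exp (t * c)}"
      unfolding p_def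
      by (rule finite_measure_mono) (use t in \<open>auto intro: mult_left_mono\<close>)
    also have "\<dots> \<le> (\<integral>\<omega>. exp (t * X \<omega>) \<partial>M) / exp (t * c)"
      by (rule integral_Markov_inequality_measure[where A = "space M"]) (use m in auto)
    also have "\<dots> \<le> exp (\<phi> (\<tau> * t)) / exp (t * c)"
      using m by (intro divide_right_mono) auto
    also have "\<dots> = exp (\<phi> s - s * (c / \<tau>))"
      using tp' unfolding t_def by (simp add: exp_diff)
    finally show ?thesis .
  qed
  show ?thesis
  proof (cases "p = 0")
    case True then show ?thesis unfolding p_def \<tau>_def by simp
  next
    case False
    then have pp: "p > 0" using p01 by simp
    have "young_fenchel \<phi> (c / \<tau>) \<le> - ln p"
    proof (rule psi_le)
      fix y
      show "c / \<tau> * y - \<phi> y \<le> - ln p"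
      proof (cases "y \<ge> 0")
        case True
        have "ln p \<le> \<phi> y - y * (c / \<tau>)" using bnd[OF True] pp
          by (metis ln_exp ln_le_cancel_iff exp_gt_zero)
        then show ?thesis by (simp add: algebra_simps)
      next
        case False
        have "c * y \<le> 0" using False c by (simp add: mult_nonneg_nonpos)
        then have "c / \<tau> * y \<le> 0" using tp' by (simp add: divide_nonpos_pos)
        moreover have "ln p \<le> 0" using pp p01 by simp
        ultimately show ?thesis using phi_nonneg[OF o, of y] by linarith
      qed
    qed
    then have "exp (ln p) \<le> exp (- young_fenchel \<phi> (c / \<tau>))" by simp
    then show ?thesis using pp unfolding p_def \<tau>_def by simp
  qed
qed



theorem theorem4:
  fixes M :: "'a measure" and \<phi> :: "real \<Rightarrow> real"
    and X :: "nat \<Rightarrow> nat \<Rightarrow> 'a \<Rightarrow> real"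
    and g f :: "real \<Rightarrow> real" and \<alpha> :: real
  assumes "prob_space M"
    and "orlicz_N \<phi>"
    and "\<And>k n. k \<ge> 1 \<Longrightarrow> n \<ge> 1 \<Longrightarrow> phi_subgaussian M \<phi> (X k n)"
    and "\<And>x. g x > 0" and "mono g"
    and "\<And>x. f x > 0"
    and "\<And>m j k n. 1 \<le> k \<Longrightarrow> k \<le> m \<Longrightarrow> 1 \<le> n \<Longrightarrow> n \<le> j \<Longrightarrow>
           g (ln (real (m * j))) / tau_phi M \<phi> (X k n) \<ge> f (real (m * j) / real (k * n))
         \<and> f (real (m * j) / real (k * n)) \<ge> 1"
    and "(\<Sum>m. \<Sum>j. ennreal (\<Sum>k=1..Suc m. \<Sum>n=1..Suc j.
            real (Suc m * Suc j) powr (- \<alpha> - f (real (Suc m * Suc j) / real (k * n))))) < \<top>"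
  shows "(\<Sum>m. \<Sum>j. ennreal (real (Suc m * Suc j) powr (- \<alpha>) *
            measure M {\<omega> \<in> space M.
              max (Max {X k n \<omega> | k n. k \<in> {1..Suc m} \<and> n \<in> {1..Suc j}}
                   - g (ln (real (Suc m * Suc j))) *
                     inv_nonneg (young_fenchel \<phi>) (ln (real (Suc m * Suc j)))) 0 > 0})) < \<top>"
proof -
  note P = assms(1) and o = assms(2)
  interpret prob_space M by (rule P)
  have key: "real (Suc m * Suc j) powr (- \<alpha>) *
            measure M {\<omega> \<in> space M.
              max (Max {X k n \<omega> | k n. k \<in> {1..Suc m} \<and> n \<in> {1..Suc j}}
                   - g (ln (real (Suc m * Suc j))) *
                     inv_nonneg (young_fenchel \<phi>) (ln (real (Suc m * Suc j)))) 0 > 0}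
     \<le> (\<Sum>k=1..Suc m. \<Sum>n=1..Suc j.
            real (Suc m * Suc j) powr (- \<alpha> - f (real (Suc m * Suc j) / real (k * n))))" for m j
  proof -
    define N where "N = real (Suc m * Suc j)"
    define L where "L = ln N"
    define v where "v = inv_nonneg (young_fenchel \<phi>) L"
    define c where "c = g L * v"
    define I where "I = {1..Suc m} \<times> {1..Suc j}"
    define F where "F = (\<lambda>(k::nat, n::nat). f (N / real (k * n)))"
    define A where "A = (\<lambda>(k, n). {\<omega> \<in> space M. X k n \<omega> > c})"
    have N: "N \<ge> 1" unfolding N_def by simp
    have L: "L \<ge> 0" unfolding L_def using N by simp
    have v: "v \<ge> 0" "young_fenchel \<phi> v = L" using psi_inv[OF o L] unfolding v_def by auto
    have c: "c \<ge> 0" unfolding c_def using v assms(4)[of L] by simp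
    have fin: "finite I" unfolding I_def by simp
    have Am: "A ` I \<subseteq> sets M"
    proof
      fix x assume "x \<in> A ` I"
      then obtain k n where kn: "(k, n) \<in> I" "x = A (k, n)" by auto
      have [measurable]: "X k n \<in> borel_measurable M"
        using assms(3)[of k n] kn unfolding I_def phi_subgaussian_def by auto
      show "x \<in> sets M" unfolding kn A_def by simp
    qed
    have sub: "{\<omega> \<in> space M. max (Max {X k n \<omega> | k n. k \<in> {1..Suc m} \<and> n \<in> {1..Suc j}} - c) 0 > 0}
        \<subseteq> (\<Union>p\<in>I. A p)"
    proof
      fix \<omega> assume w: "\<omega> \<in> {\<omega> \<in> space M. max (Max {X k n \<omega> | k n. k \<in> {1..Suc m} \<and> n \<in> {1..Suc j}} - c) 0 > 0}"
      have eq: "{X k n \<omega> | k n. k \<in> {1..Suc m} \<and> n \<in> {1..Suc j}} = (\<lambda>(k, n). X k n \<omega>) ` I"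
        unfolding I_def by (auto; blast)
      have "0 < max (Max {X k n \<omega> | k n. k \<in> {1..Suc m} \<and> n \<in> {1..Suc j}} - c) 0" using w by blast
      then have "c < Max {X k n \<omega> | k n. k \<in> {1..Suc m} \<and> n \<in> {1..Suc j}}"
        by (simp add: max_def split: if_splits)
      then have "c < Max ((\<lambda>(k, n). X k n \<omega>) ` I)" unfolding eq .
      then obtain p where "p \<in> I" "c < (\<lambda>(k, n). X k n \<omega>) p"
        using Max_gr_iff[of "(\<lambda>(k, n). X k n \<omega>) ` I"] fin unfolding I_def by auto
      then show "\<omega> \<in> (\<Union>p\<in>I. A p)" using w unfolding A_def by (auto split: prod.splits)
    qed
    have each: "measure M (A p) \<le> N powr (- F p)" if p: "p \<in> I" for p
    proof -
      obtain k n where kn: "p = (k, n)" by (cases p)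
      have r: "1 \<le> k" "k \<le> Suc m" "1 \<le> n" "n \<le> Suc j" using p kn unfolding I_def by auto
      define \<tau> where "\<tau> = tau_phi M \<phi> (X k n)"
      have h: "g L / \<tau> \<ge> F p" "F p \<ge> 1"
        using assms(7)[OF r] unfolding F_def kn \<tau>_def L_def N_def by auto
      have gp: "g L > 0" by (rule assms(4))
      have tp: "\<tau> > 0"
      proof (rule ccontr)
        assume "\<not> \<tau> > 0"
        then have "g L / \<tau> \<le> 0" using gp by (simp add: divide_nonneg_nonpos)
        then show False using h by simp
      qed
      have "measure M (A p) \<le> exp (- young_fenchel \<phi> (c / \<tau>))"
        unfolding A_def kn \<tau>_def using tail_bound[OF P o assms(3) _ c, of k n] r tp unfolding \<tau>_def by auto
      also have "\<dots> \<le> exp (- (F p * L))"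
      proof -
        have "F p * L = F p * young_fenchel \<phi> v" using v by simp
        also have "\<dots> \<le> young_fenchel \<phi> (F p * v)" by (rule psi_scale_up[OF o h(2)])
        also have "\<dots> \<le> young_fenchel \<phi> (c / \<tau>)"
        proof (rule psi_mono[OF o])
          show "0 \<le> F p * v" using h v by simp
          have e: "c / \<tau> = (g L / \<tau>) * v" unfolding c_def by simp
          show "F p * v \<le> c / \<tau>" unfolding e using h(1) v(1) by (rule mult_right_mono)
        qed
        finally show ?thesis by simp
      qed
      also have "\<dots> = N powr (- F p)" using N unfolding L_def by (simp add: powr_def)
      finally show ?thesis .
    qed
    have "measure M {\<omega> \<in> space M. max (Max {X k n \<omega> | k n. k \<in> {1..Suc m} \<and> n \<in> {1..Suc j}} - c) 0 > 0}
        \<le> measure M (\<Union>p\<in>I. A p)"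
      using sub Am fin by (intro finite_measure_mono) auto
    also have "\<dots> \<le> (\<Sum>p\<in>I. measure M (A p))" by (rule finite_measure_subadditive_finite[OF fin Am])
    also have "\<dots> \<le> (\<Sum>p\<in>I. N powr (- F p))" by (rule sum_mono[OF each])
    finally have "N powr (- \<alpha>) * measure M {\<omega> \<in> space M. max (Max {X k n \<omega> | k n. k \<in> {1..Suc m} \<and> n \<in> {1..Suc j}} - c) 0 > 0}
        \<le> N powr (- \<alpha>) * (\<Sum>p\<in>I. N powr (- F p))" by (intro mult_left_mono) auto
    also have "\<dots> = (\<Sum>p\<in>I. N powr (- \<alpha> - F p))"
      by (simp add: sum_distrib_left powr_add[symmetric])
    also have "\<dots> = (\<Sum>k=1..Suc m. \<Sum>n=1..Suc j. N powr (- \<alpha> - f (N / real (k * n))))"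
      unfolding I_def F_def by (simp only: sum.cartesian_product split_def fst_conv snd_conv)
    finally show ?thesis unfolding N_def L_def c_def v_def by simp
  qed
  have "(\<Sum>m. \<Sum>j. ennreal (real (Suc m * Suc j) powr (- \<alpha>) *
            measure M {\<omega> \<in> space M.
              max (Max {X k n \<omega> | k n. k \<in> {1..Suc m} \<and> n \<in> {1..Suc j}}
                   - g (ln (real (Suc m * Suc j))) *
                     inv_nonneg (young_fenchel \<phi>) (ln (real (Suc m * Suc j)))) 0 > 0}))
     \<le> (\<Sum>m. \<Sum>j. ennreal (\<Sum>k=1..Suc m. \<Sum>n=1..Suc j.
            real (Suc m * Suc j) powr (- \<alpha> - f (real (Suc m * Suc j) / real (k * n)))))"
    by (intro suminf_le summableI allI ennreal_leI key)
  then show ?thesis using assms(8) by (rule le_less_trans)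
qed

end
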